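(* Let $X$ be a non-empty set, $(Y,\langle\cdot,\cdot\rangle)$ a real inner product space, and let $I:X\to\mathbb{R}$, $\Phi:X\to Y$ be such that (i) $\sup_X I<+\infty$; (ii) $\inf_{z\in\Phi(X)}\langle z,y\rangle=-\infty$ for all $y\in\Phi(X)\setminus\{0\}$. Then, for each $\mu>0$, at least one of the following assertions holds: (a) for each filtering cover $\mathcal{N}$ of $X$ there exists $A\in\mathcal{N}$ such that $$\sup_{\lambda\in Y}\inf_{x\in A}\big(I(x)+\mu(2\langle\Phi(x),\lambda\rangle-\|\lambda\|^2)\big)<\inf_{x\in A}\sup_{\lambda\in\Phi(A)}\big(I(x)+\mu(2\langle\Phi(x),\lambda\rangle-\|\lambda\|^2)\big);$$ (b) the set of all global minima in $X$ of the function $x\mapsto I(x)+\mu\|\Phi(x)\|^2$ is contained in $\Phi^{-1}(0)$.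
   Context: A family $\mathcal{N}$ of non-empty subsets of $X$ is a filtering cover of $X$ if $\bigcup_{A\in\mathcal{N}}A=X$ and for each $A_1,A_2\in\mathcal{N}$ there is $A_3\in\mathcal{N}$ with $A_1\cup A_2\subseteq A_3$. *)

theory Defs
  imports "HOL-Analysis.Analysis"
begin

definition filtering_cover :: "'a set \<Rightarrow> 'a set set \<Rightarrow> bool" where
  "filtering_cover X N \<longleftrightarrow>
     (\<forall>A\<in>N. A \<noteq> {} \<and> A \<subseteq> X) \<and> \<Union>N = X \<and>
     (\<forall>A1\<in>N. \<forall>A2\<in>N. \<exists>A3\<in>N. A1 \<union> A2 \<subseteq> A3)"

end

theory Submission
  imports Defs
begin

lemma nd_sq: "(norm (l - a))\<^sup>2 = (norm l)\<^sup>2 - 2*(a \<bullet> l) + (norm (a::'b::real_inner))\<^sup>2"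
  by (simp add: power2_norm_eq_inner inner_diff inner_commute algebra_simps)

theorem theorem3p5:
  fixes X :: "'a set" and I :: "'a \<Rightarrow> real" and \<Phi> :: "'a \<Rightarrow> 'b::real_inner"
  assumes "X \<noteq> {}"
    and "(SUP x\<in>X. ereal (I x)) < \<infinity>"
    and "\<forall>y\<in>\<Phi> ` X - {0}. (INF z\<in>\<Phi> ` X. ereal (z \<bullet> y)) = - \<infinity>"
    and "\<mu> > (0::real)"
  shows "(\<forall>N. filtering_cover X N \<longrightarrow>
            (\<exists>A\<in>N. (SUP l\<in>(UNIV::'b set). INF x\<in>A. ereal (I x + \<mu> * (2 * (\<Phi> x \<bullet> l) - (norm l)\<^sup>2)))
                    < (INF x\<in>A. SUP l\<in>\<Phi> ` A. ereal (I x + \<mu> * (2 * (\<Phi> x \<bullet> l) - (norm l)\<^sup>2)))))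
         \<or> {x\<in>X. \<forall>y\<in>X. I x + \<mu> * (norm (\<Phi> x))\<^sup>2 \<le> I y + \<mu> * (norm (\<Phi> y))\<^sup>2} \<subseteq> {x\<in>X. \<Phi> x = 0}"
proof (rule disjCI)
  assume "\<not> ({x\<in>X. \<forall>y\<in>X. I x + \<mu> * (norm (\<Phi> x))\<^sup>2 \<le> I y + \<mu> * (norm (\<Phi> y))\<^sup>2} \<subseteq> {x\<in>X. \<Phi> x = 0})"
  then obtain x0 where x0: "x0 \<in> X" "\<And>y. y \<in> X \<Longrightarrow> I x0 + \<mu> * (norm (\<Phi> x0))\<^sup>2 \<le> I y + \<mu> * (norm (\<Phi> y))\<^sup>2"
    and a0: "\<Phi> x0 \<noteq> 0" by auto
  define a where "a = \<Phi> x0"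
  define m where "m = I x0 + \<mu> * (norm a)\<^sup>2"
  define J where "J = (\<lambda>x l. I x + \<mu> * (2 * (\<Phi> x \<bullet> l) - (norm l)\<^sup>2))"
  have "ereal (I x0) \<le> (SUP x\<in>X. ereal (I x))" using x0(1) by (rule SUP_upper)
  then obtain S where S: "(SUP x\<in>X. ereal (I x)) = ereal S" using assms(2)
    by (cases "(SUP x\<in>X. ereal (I x))") auto
  have IS: "I x \<le> S" if "x \<in> X" for x
  proof -
    have "ereal (I x) \<le> (SUP x\<in>X. ereal (I x))" using that by (rule SUP_upper)
    then show ?thesis using S by simp
  qed
  have "a \<in> \<Phi> ` X - {0}" using x0(1) a0 a_def by auto
  then have "(INF z\<in>\<Phi> ` X. ereal (z \<bullet> a)) < ereal ((m - 1 - S)/(2*\<mu>))" using assms(3) by auto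
  then obtain x1 where x1: "x1 \<in> X" "\<Phi> x1 \<bullet> a < (m - 1 - S)/(2*\<mu>)"
    by (auto simp: INF_less_iff)
  define b where "b = \<Phi> x1"
  define K where "K = norm b"
  define \<delta> where "\<delta> = 1 / (4*\<mu>*(K+1))"
  define c where "c = min (1/2) (\<mu>*\<delta>\<^sup>2)"
  have Kp: "K \<ge> 0" by (simp add: K_def)
  have dp: "\<delta> > 0" using assms(4) Kp by (simp add: \<delta>_def)
  have cp: "c > 0" using dp assms(4) by (simp add: c_def)
  have Kd: "2*\<mu>*K*\<delta> \<le> 1/2"
  proof -
    have "2*\<mu>*K*\<delta> = (K/(K+1))/2" proof -
      have "4*\<mu>*(K+1) \<noteq> 0" using assms(4) Kp by simp
      then show ?thesis using assms(4) Kp unfolding \<delta>_def by (simp add: divide_simps)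
    qed
    also have "\<dots> \<le> 1/2" using Kp by (simp add: field_simps)
    finally show ?thesis .
  qed
  have bound: "J x0 l \<le> m - c \<or> J x1 l \<le> m - c" for l
  proof (cases "norm (l - a) \<ge> \<delta>")
    case True
    have "J x0 l = m - \<mu> * (norm (l - a))\<^sup>2"
      unfolding J_def m_def nd_sq a_def by (simp add: inner_commute algebra_simps)
    moreover have "\<delta>\<^sup>2 \<le> (norm (l - a))\<^sup>2" using True dp by (simp add: power_mono)
    ultimately have "J x0 l \<le> m - \<mu>*\<delta>\<^sup>2" using assms(4) by (simp add: mult_left_mono)
    then show ?thesis unfolding c_def by linarith
  next
    case False
    have "b \<bullet> (l - a) \<le> K * norm (l - a)" unfolding K_def
      using Cauchy_Schwarz_ineq2 by (meson abs_le_D1 norm_cauchy_schwarz)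
    also have "\<dots> \<le> K * \<delta>" using False Kp by (simp add: mult_left_mono)
    finally have h1: "b \<bullet> l \<le> b \<bullet> a + K*\<delta>" by (simp add: inner_diff_right)
    have h2: "2*\<mu>*(b \<bullet> a) < m - 1 - S" using x1(2) assms(4) by (simp add: b_def field_simps)
    have "J x1 l \<le> S + 2*\<mu>*(b \<bullet> l)" unfolding J_def b_def
      using IS[OF x1(1)] assms(4) by (simp add: algebra_simps add_increasing2)
    also have "\<dots> \<le> S + 2*\<mu>*(b \<bullet> a) + 2*\<mu>*K*\<delta>"
    proof -
      have "2*\<mu>*(b \<bullet> l) \<le> 2*\<mu>*(b \<bullet> a + K*\<delta>)" using h1 assms(4) by (intro mult_left_mono) auto
      then show ?thesis by (simp add: algebra_simps)
    qed
    also have "\<dots> \<le> m - 1/2" using h2 Kd by simp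
    finally show ?thesis unfolding c_def by linarith
  qed
  show "\<forall>N. filtering_cover X N \<longrightarrow>
            (\<exists>A\<in>N. (SUP l\<in>(UNIV::'b set). INF x\<in>A. ereal (I x + \<mu> * (2 * (\<Phi> x \<bullet> l) - (norm l)\<^sup>2)))
                    < (INF x\<in>A. SUP l\<in>\<Phi> ` A. ereal (I x + \<mu> * (2 * (\<Phi> x \<bullet> l) - (norm l)\<^sup>2))))"
  proof (intro allI impI)
    fix N assume N: "filtering_cover X N"
    obtain A0 where A0: "A0 \<in> N" "x0 \<in> A0" using N x0(1) unfolding filtering_cover_def by blast
    obtain A1 where A1: "A1 \<in> N" "x1 \<in> A1" using N x1(1) unfolding filtering_cover_def by blast
    obtain A where A: "A \<in> N" "A0 \<union> A1 \<subseteq> A" using N A0 A1 unfolding filtering_cover_def by blast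
    have AX: "A \<subseteq> X" using N A unfolding filtering_cover_def by blast
    have L: "(SUP l\<in>(UNIV::'b set). INF x\<in>A. ereal (J x l)) \<le> ereal (m - c)"
    proof (rule SUP_least)
      fix l :: 'b
      from bound[of l] show "(INF x\<in>A. ereal (J x l)) \<le> ereal (m - c)"
      proof
        assume "J x0 l \<le> m - c"
        moreover have "(INF x\<in>A. ereal (J x l)) \<le> ereal (J x0 l)" using A A0 by (intro INF_lower) auto
        ultimately show ?thesis by (meson ereal_less_eq(3) order_trans)
      next
        assume "J x1 l \<le> m - c"
        moreover have "(INF x\<in>A. ereal (J x l)) \<le> ereal (J x1 l)" using A A1 by (intro INF_lower) auto
        ultimately show ?thesis by (meson ereal_less_eq(3) order_trans)
      qed
    qed
    have R: "ereal m \<le> (INF x\<in>A. SUP l\<in>\<Phi> ` A. ereal (J x l))"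
    proof (rule INF_greatest)
      fix x assume xA: "x \<in> A"
      have "m \<le> J x (\<Phi> x)" using x0(2)[of x] xA AX unfolding m_def a_def J_def
        by (auto simp: power2_norm_eq_inner)
      also have "ereal (J x (\<Phi> x)) \<le> (SUP l\<in>\<Phi> ` A. ereal (J x l))" using xA by (intro SUP_upper) auto
      finally show "ereal m \<le> (SUP l\<in>\<Phi> ` A. ereal (J x l))" by simp
    qed
    have "ereal (m - c) < ereal m" using cp by simp
    with L R have "(SUP l\<in>(UNIV::'b set). INF x\<in>A. ereal (J x l)) < (INF x\<in>A. SUP l\<in>\<Phi> ` A. ereal (J x l))"
      by (meson order_le_less_trans order_less_le_trans)
    then show "\<exists>A\<in>N. (SUP l\<in>(UNIV::'b set). INF x\<in>A. ereal (I x + \<mu> * (2 * (\<Phi> x \<bullet> l) - (norm l)\<^sup>2)))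
                    < (INF x\<in>A. SUP l\<in>\<Phi> ` A. ereal (I x + \<mu> * (2 * (\<Phi> x \<bullet> l) - (norm l)\<^sup>2)))"
      using A(1) unfolding J_def by blast
  qed
qed

end
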